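(* Let $d\in\mathbb{N}$. If a linear functional $L:\mathbb{R}[\underline x]_{2d}\to\mathbb{R}$ satisfies $L(p^2)>0$ for all $p\in\mathbb{R}[\underline x]_d\setminus\{0\}$, then $L$ extends to a linear functional $\widetilde L:\mathbb{R}[\underline x]\to\mathbb{R}$ satisfying $\widetilde L(p^2)>0$ for all $p\in\mathbb{R}[\underline x]\setminus\{0\}$.
   Context: $\mathbb{R}[\underline x]=\mathbb{R}[x_1,\dots,x_n]$, and $\mathbb{R}[\underline x]_k$ denotes the subspace of polynomials of degree at most $k$. *)

theory Defs
  imports "HOL-Analysis.Analysis" "HOL-Library.Poly_Mapping"
begin

text \<open>Real polynomials in the variables indexed by a finite type 'v
  (so n = CARD('v) variables): finitely supported maps from monomials
  (exponent vectors) to real coefficients.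
  Multiplication is the convolution product from Poly_Mapping.\<close>

type_synonym 'v rpoly = "('v \<Rightarrow>\<^sub>0 nat) \<Rightarrow>\<^sub>0 real"

definition mon_deg :: "('v \<Rightarrow>\<^sub>0 nat) \<Rightarrow> nat" where
  "mon_deg m = (\<Sum>i\<in>Poly_Mapping.keys m. Poly_Mapping.lookup m i)"

definition deg_le :: "nat \<Rightarrow> 'v rpoly \<Rightarrow> bool" where
  "deg_le k p \<longleftrightarrow> (\<forall>m\<in>Poly_Mapping.keys p. mon_deg m \<le> k)"

definition pscale :: "real \<Rightarrow> 'v rpoly \<Rightarrow> 'v rpoly" where
  "pscale c p = Poly_Mapping.map (\<lambda>a. c * a) p"

definition linear_on_deg :: "nat \<Rightarrow> ('v rpoly \<Rightarrow> real) \<Rightarrow> bool" where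
  "linear_on_deg k L \<longleftrightarrow>
     (\<forall>p q. deg_le k p \<longrightarrow> deg_le k q \<longrightarrow> L (p + q) = L p + L q) \<and>
     (\<forall>c p. deg_le k p \<longrightarrow> L (pscale c p) = c * L p)"

definition linear_poly_fun :: "('v rpoly \<Rightarrow> real) \<Rightarrow> bool" where
  "linear_poly_fun L \<longleftrightarrow>
     (\<forall>p q. L (p + q) = L p + L q) \<and> (\<forall>c p. L (pscale c p) = c * L p)"

end

theory Submission
  imports Defs
begin



definition qf :: "('a \<Rightarrow> 'a \<Rightarrow> real) \<Rightarrow> 'a set \<Rightarrow> ('a \<Rightarrow> real) \<Rightarrow> real" where
  "qf G S u = (\<Sum>a\<in>S. \<Sum>b\<in>S. u a * u b * G a b)"

definition nsq :: "'a set \<Rightarrow> ('a \<Rightarrow> real) \<Rightarrow> real" where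
  "nsq S u = (\<Sum>a\<in>S. (u a)^2)"

lemma nsq_nonneg: "nsq S u \<ge> 0"
  unfolding nsq_def by (simp add: sum_nonneg)

lemma qf_cong: "(\<And>a. a \<in> S \<Longrightarrow> u a = v a) \<Longrightarrow> qf G S u = qf G S v"
  unfolding qf_def by (auto intro!: sum.cong)

lemma qf_insert:
  assumes "finite S" "s \<notin> S" "\<And>a b. G a b = G b a"
  shows "qf G (insert s S) u = u s * u s * G s s + 2 * u s * (\<Sum>b\<in>S. G s b * u b) + qf G S u"
proof -
  have "qf G (insert s S) u = (\<Sum>b\<in>insert s S. u s * u b * G s b) + (\<Sum>a\<in>S. \<Sum>b\<in>insert s S. u a * u b * G a b)"
    unfolding qf_def using assms by (simp add: sum.insert)
  also have "\<dots> = u s * u s * G s s + (\<Sum>b\<in>S. u s * u b * G s b) + (\<Sum>a\<in>S. u a * u s * G a s) + qf G S u"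
    unfolding qf_def using assms by (simp add: sum.insert sum.distrib)
  also have "(\<Sum>a\<in>S. u a * u s * G a s) = (\<Sum>b\<in>S. u s * u b * G s b)"
    by (rule sum.cong) (auto simp: assms(3))
  also have "(\<Sum>b\<in>S. u s * u b * G s b) = u s * (\<Sum>b\<in>S. G s b * u b)"
    by (simp add: sum_distrib_left mult_ac)
  finally show ?thesis by simp
qed

lemma qf_schur:
  assumes "g \<noteq> 0" "\<And>a b. G a b = G b a"
  shows "qf (\<lambda>a b. G a b - G a s * G s b / g) S u = qf G S u - (\<Sum>b\<in>S. G s b * u b)^2 / g"
proof -
  have "qf (\<lambda>a b. G a b - G a s * G s b / g) S u = qf G S u - (\<Sum>a\<in>S. \<Sum>b\<in>S. (u a * G a s) * (G s b * u b) / g)"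
    unfolding qf_def by (simp add: right_diff_distrib sum_subtractf mult_ac)
  also have "(\<Sum>a\<in>S. \<Sum>b\<in>S. (u a * G a s) * (G s b * u b) / g) = (\<Sum>a\<in>S. u a * G a s) * (\<Sum>b\<in>S. G s b * u b) / g"
    by (simp add: sum_distrib_left sum_distrib_right sum_divide_distrib) (rule sum.swap)
  also have "(\<Sum>a\<in>S. u a * G a s) = (\<Sum>b\<in>S. G s b * u b)"
    using assms(2) by (simp add: mult_ac)
  finally show ?thesis by (simp add: power2_eq_square)
qed

lemma coercive:
  assumes "finite S" "\<And>a b. G a b = G b a" "\<And>u. (\<exists>a\<in>S. u a \<noteq> 0) \<Longrightarrow> qf G S u > 0"
  shows "\<exists>\<alpha>>0. \<forall>u. qf G S u \<ge> \<alpha> * nsq S u"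
  using assms
proof (induction S arbitrary: G rule: finite_induct)
  case empty
  then show ?case by (intro exI[of _ 1]) (simp add: qf_def nsq_def)
next
  case (insert s S G)
  define g where "g = G s s"
  define lf where "lf u = (\<Sum>b\<in>S. G s b * u b)" for u
  have qi: "qf G (insert s S) u = u s * u s * g + 2 * u s * lf u + qf G S u" for u
    unfolding g_def lf_def by (rule qf_insert) (use insert in auto)
  have "g > 0"
  proof -
    define e where "e = (\<lambda>x. if x = s then 1 else (0::real))"
    have "qf G (insert s S) e > 0" by (rule insert.prems(2)) (auto simp: e_def)
    moreover have "lf e = 0" unfolding lf_def e_def using insert(2) by (auto intro!: sum.neutral)
    moreover have "qf G S e = 0" unfolding qf_def e_def using insert(2) by (auto intro!: sum.neutral)
    ultimately show ?thesis using qi[of e] by (simp add: e_def)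
  qed
  define G' where "G' a b = G a b - G a s * G s b / g" for a b
  have sch: "qf G' S u = qf G S u - (lf u)^2 / g" for u
    unfolding G'_def lf_def by (rule qf_schur) (use \<open>g > 0\<close> insert in auto)
  have "\<exists>\<alpha>>0. \<forall>u. qf G' S u \<ge> \<alpha> * nsq S u"
  proof (rule insert.IH)
    show "G' a b = G' b a" for a b unfolding G'_def using insert.prems(1)[of a b] insert.prems(1)[of a s] insert.prems(1)[of s b]
      by (simp add: mult_ac)
  next
    fix u :: "_ \<Rightarrow> real" assume u: "\<exists>a\<in>S. u a \<noteq> 0"
    define v where "v = u(s := - lf u / g)"
    have lv: "lf v = lf u" unfolding lf_def v_def using insert(2) by (auto intro!: sum.cong)
    moreover have "qf G S v = qf G S u" unfolding v_def by (rule qf_cong) (use insert(2) in auto)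
    moreover have "qf G (insert s S) v > 0"
      by (rule insert.prems(2)) (use u insert(2) in \<open>auto simp: v_def\<close>)
    moreover have "qf G (insert s S) v = qf G S v + (lf v)^2 / g - 2 * (lf v)^2 / g"
      using qi[of v] \<open>g > 0\<close> lv apply (simp add: v_def field_simps power2_eq_square) by (metis distrib_left)
    ultimately have "qf G S u - (lf u)^2 / g > 0" by simp
    then show "qf G' S u > 0" using sch by simp
  qed
  then obtain \<alpha>' where a': "\<alpha>' > 0" "\<And>u. qf G' S u \<ge> \<alpha>' * nsq S u" by blast
  define C where "C = (\<Sum>b\<in>S. (G s b)^2)"
  have "C \<ge> 0" unfolding C_def by (simp add: sum_nonneg)
  define K where "K = 2 * C / g^2 + 1"
  have "K \<ge> 1" unfolding K_def using \<open>C \<ge> 0\<close> \<open>g > 0\<close> by simp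
  define \<alpha> where "\<alpha> = min (g/2) (\<alpha>' / K)"
  have "\<alpha> > 0" unfolding \<alpha>_def using \<open>g > 0\<close> a'(1) \<open>K \<ge> 1\<close> by simp
  moreover have "qf G (insert s S) u \<ge> \<alpha> * nsq (insert s S) u" for u
  proof -
    define y where "y = u s + lf u / g"
    define N where "N = nsq S u"
    have "N \<ge> 0" unfolding N_def by (rule nsq_nonneg)
    have ni: "nsq (insert s S) u = (u s)^2 + N" unfolding N_def nsq_def using insert(1,2) by simp
    have q: "qf G (insert s S) u = g * y^2 + qf G' S u"
      unfolding sch qi y_def using \<open>g > 0\<close> by (simp add: field_simps power2_eq_square)
    have cs: "(lf u)^2 \<le> C * N" unfolding lf_def C_def N_def nsq_def by (rule Cauchy_Schwarz_ineq_sum)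
    have us: "(u s)^2 \<le> 2 * y^2 + 2 * (lf u / g)^2"
    proof -
      have "u s = y - lf u / g" unfolding y_def by simp
      moreover have "(a - b)^2 \<le> 2 * a^2 + 2 * b^2" for a b :: real
        using zero_le_power2[of "a + b"] by (simp add: power2_eq_square algebra_simps)
      ultimately show ?thesis by simp
    qed
    have "(lf u / g)^2 \<le> C * N / g^2" using cs \<open>g > 0\<close> by (simp add: power_divide divide_right_mono)
    moreover have "K * N = 2 * (C * N / g^2) + N" unfolding K_def by (simp add: field_simps)
    ultimately have b1: "(u s)^2 + N \<le> 2 * y^2 + K * N" using us by linarith
    then have "\<alpha> * ((u s)^2 + N) \<le> \<alpha> * (2 * y^2) + \<alpha> * K * N"
    proof -
      from mult_left_mono[OF b1 less_imp_le[OF \<open>\<alpha> > 0\<close>]] show ?thesis by (simp add: algebra_simps)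
    qed
    also have "\<alpha> * (2 * y^2) \<le> g * y^2"
    proof -
      have "2 * \<alpha> \<le> g" unfolding \<alpha>_def by (simp add: min_def mult.commute)
      from mult_right_mono[OF this zero_le_power2[of y]] show ?thesis by simp
    qed
    also have "\<alpha> * K * N \<le> \<alpha>' * N"
    proof -
      have "\<alpha> * K \<le> \<alpha>'" unfolding \<alpha>_def using \<open>K \<ge> 1\<close>
        by (simp add: min_def field_simps)
      then show ?thesis using \<open>N \<ge> 0\<close> by (intro mult_right_mono)
    qed
    also have "g * y^2 + \<alpha>' * N \<le> qf G (insert s S) u" unfolding q N_def using a'(2)[of u] by simp
    finally show ?thesis unfolding ni by simp
  qed
  ultimately show ?case by blast
qed


lemma amgm_eps:
  fixes x y e :: real assumes "e > 0"
  shows "- (2 * (x * y)) \<le> e * x^2 + y^2 / e"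
proof -
  have "0 \<le> (e * x + y)^2 / e" using assms by simp
  also have "(e * x + y)^2 / e = e * x^2 + y^2 / e + 2 * (x * y)"
    using assms by (simp add: power2_eq_square field_simps)
  finally show ?thesis by simp
qed

lemma qf_union:
  assumes "finite A" "finite C" "A \<inter> C = {}" "\<And>a c. P a c = P c a"
  shows "qf P (A \<union> C) u = qf P A u + 2 * (\<Sum>a\<in>A. \<Sum>c\<in>C. u a * u c * P a c) + qf P C u"
proof -
  have "qf P (A \<union> C) u = (\<Sum>a\<in>A. \<Sum>b\<in>A \<union> C. u a * u b * P a b) + (\<Sum>a\<in>C. \<Sum>b\<in>A \<union> C. u a * u b * P a b)"
    unfolding qf_def using assms by (simp add: sum.union_disjoint)
  also have "\<dots> = qf P A u + (\<Sum>a\<in>A. \<Sum>c\<in>C. u a * u c * P a c) + ((\<Sum>c\<in>C. \<Sum>a\<in>A. u c * u a * P c a) + qf P C u)"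
    unfolding qf_def using assms by (simp add: sum.union_disjoint sum.distrib)
  also have "(\<Sum>c\<in>C. \<Sum>a\<in>A. u c * u a * P c a) = (\<Sum>a\<in>A. \<Sum>c\<in>C. u a * u c * P a c)"
    by (subst sum.swap) (simp add: assms(4) mult_ac)
  finally show ?thesis by simp
qed

lemma block_step:
  assumes "finite A" "finite C" "A \<inter> C = {}" "\<alpha> > 0"
    and QA: "\<And>u. qf P A u \<ge> \<alpha> * nsq A u"
    and QC: "\<And>u. qf P C u \<ge> \<tau> * nsq C u"
    and sym: "\<And>a c. P a c = P c a"
    and G: "G = (\<Sum>a\<in>A. \<Sum>c\<in>C. \<bar>P a c\<bar>)"
    and tau: "\<tau> \<ge> 2 * (G + 1) * G / \<alpha> + \<alpha> / 2"
  shows "qf P (A \<union> C) u \<ge> (\<alpha> / 2) * nsq (A \<union> C) u"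
proof -
  have "G \<ge> 0" unfolding G by (simp add: sum_nonneg)
  define e where "e = \<alpha> / (2 * (G + 1))"
  have "e > 0" unfolding e_def using \<open>G \<ge> 0\<close> assms(4) by simp
  define X where "X = (\<Sum>a\<in>A. \<Sum>c\<in>C. u a * u c * P a c)"
  have tw: "- (2 * (u a * u c * P a c)) \<le> \<bar>P a c\<bar> * (e * (u a)^2 + (u c)^2 / e)" for a c
  proof -
    have "- (2 * (u a * u c * P a c)) \<le> \<bar>P a c\<bar> * (2 * (\<bar>u a\<bar> * \<bar>u c\<bar>))"
      by (simp add: abs_mult[symmetric] abs_le_iff mult_ac)
    also have "\<dots> \<le> \<bar>P a c\<bar> * (e * \<bar>u a\<bar>^2 + \<bar>u c\<bar>^2 / e)"
      using amgm_eps[OF \<open>e > 0\<close>, of "\<bar>u a\<bar>" "- \<bar>u c\<bar>"]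
      by (intro mult_left_mono) auto
    finally show ?thesis by simp
  qed
  have "(\<Sum>a\<in>A. \<Sum>c\<in>C. - (2 * (u a * u c * P a c))) \<le> (\<Sum>a\<in>A. \<Sum>c\<in>C. \<bar>P a c\<bar> * (e * (u a)^2 + (u c)^2 / e))"
    by (intro sum_mono tw)
  moreover have "(\<Sum>a\<in>A. \<Sum>c\<in>C. - (2 * (u a * u c * P a c))) = - (2 * X)"
    unfolding X_def by (simp add: sum_negf sum_distrib_left)
  ultimately have "- (2 * X) \<le> (\<Sum>a\<in>A. \<Sum>c\<in>C. \<bar>P a c\<bar> * (e * (u a)^2 + (u c)^2 / e))" by simp
  also have "\<dots> = e * (\<Sum>a\<in>A. (u a)^2 * (\<Sum>c\<in>C. \<bar>P a c\<bar>)) + (\<Sum>c\<in>C. (u c)^2 * (\<Sum>a\<in>A. \<bar>P a c\<bar>)) / e"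
    by (simp add: distrib_left sum.distrib sum_distrib_left sum_distrib_right sum_divide_distrib mult_ac)
       (subst sum.swap, simp add: sum_distrib_left sum_distrib_right mult_ac)
  also have "\<dots> \<le> e * (G * nsq A u) + (G * nsq C u) / e"
  proof (intro add_mono mult_left_mono divide_right_mono)
    have "G * nsq A u = (\<Sum>a\<in>A. G * (u a)^2)" by (simp add: nsq_def sum_distrib_left)
    moreover have "(\<Sum>a\<in>A. (u a)^2 * (\<Sum>c\<in>C. \<bar>P a c\<bar>)) \<le> (\<Sum>a\<in>A. G * (u a)^2)"
    proof (intro sum_mono)
      fix a assume "a \<in> A"
      have "(\<Sum>c\<in>C. \<bar>P a c\<bar>) \<le> G" unfolding G
        by (rule member_le_sum[where f = "\<lambda>a. \<Sum>c\<in>C. \<bar>P a c\<bar>"]) (use \<open>a \<in> A\<close> assms(1) in \<open>auto intro: sum_nonneg\<close>)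
      then show "(u a)^2 * (\<Sum>c\<in>C. \<bar>P a c\<bar>) \<le> G * (u a)^2" by (metis mult.commute mult_left_mono zero_le_power2)
    qed
    ultimately show "(\<Sum>a\<in>A. (u a)^2 * (\<Sum>c\<in>C. \<bar>P a c\<bar>)) \<le> G * nsq A u" by simp
    have "G * nsq C u = (\<Sum>c\<in>C. G * (u c)^2)" by (simp add: nsq_def sum_distrib_left)
    moreover have "(\<Sum>c\<in>C. (u c)^2 * (\<Sum>a\<in>A. \<bar>P a c\<bar>)) \<le> (\<Sum>c\<in>C. G * (u c)^2)"
    proof (intro sum_mono)
      fix c assume "c \<in> C"
      have "(\<Sum>a\<in>A. \<bar>P a c\<bar>) \<le> G" unfolding G
        by (rule sum_mono) (rule member_le_sum, use \<open>c \<in> C\<close> assms(2) in auto)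
      then show "(u c)^2 * (\<Sum>a\<in>A. \<bar>P a c\<bar>) \<le> G * (u c)^2" by (metis mult.commute mult_left_mono zero_le_power2)
    qed
    ultimately show "(\<Sum>c\<in>C. (u c)^2 * (\<Sum>a\<in>A. \<bar>P a c\<bar>)) \<le> G * nsq C u" by simp
  qed (use \<open>e > 0\<close> in auto)
  finally have cross: "- (2 * X) \<le> e * G * nsq A u + G / e * nsq C u" by simp
  have eG: "e * G \<le> \<alpha> / 2" unfolding e_def using \<open>G \<ge> 0\<close> assms(4) by (simp add: field_simps)
  have Ge: "G / e = 2 * (G + 1) * G / \<alpha>" unfolding e_def using \<open>G \<ge> 0\<close> assms(4) by (simp add: field_simps)
  have nA: "nsq A u \<ge> 0" "nsq C u \<ge> 0" by (rule nsq_nonneg)+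
  have u: "nsq (A \<union> C) u = nsq A u + nsq C u" unfolding nsq_def using assms by (simp add: sum.union_disjoint)
  have "qf P (A \<union> C) u = qf P A u + 2 * X + qf P C u" unfolding X_def by (rule qf_union) (use assms in auto)
  moreover have "e * G * nsq A u \<le> \<alpha> / 2 * nsq A u" using eG nA by (intro mult_right_mono)
  moreover have "(2 * (G + 1) * G / \<alpha> + \<alpha> / 2) * nsq C u \<le> \<tau> * nsq C u" using tau nA by (intro mult_right_mono)
  ultimately show ?thesis using QA[of u] QC[of u] cross unfolding u Ge by (simp add: algebra_simps)
qed




definition sqm :: "('v::finite \<Rightarrow>\<^sub>0 nat) \<Rightarrow> nat" where
  "sqm m = (\<Sum>i\<in>UNIV. (Poly_Mapping.lookup m i)^2)"

lemma sqm_double: "sqm (b + b) = 4 * sqm b"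
proof -
  have "\<And>i. (Poly_Mapping.lookup (b + b) i)^2 = 4 * (Poly_Mapping.lookup b i)^2"
    by (simp add: lookup_add mult_2[symmetric] power_mult_distrib)
  then show ?thesis unfolding sqm_def by (simp only: sum_distrib_left)
qed

lemma sqm_pos: "b \<noteq> 0 \<Longrightarrow> sqm b \<ge> 1"
proof -
  assume "b \<noteq> 0"
  then obtain i where "Poly_Mapping.lookup b i \<noteq> 0" by (metis lookup_zero poly_mapping_eqI)
  then have "1 \<le> (Poly_Mapping.lookup b i)^2" by simp
  also have "\<dots> \<le> sqm b" unfolding sqm_def by (rule member_le_sum) auto
  finally show ?thesis .
qed

lemma sqm_add_le:
  assumes "b \<noteq> c"
  shows "sqm (b + c) + 1 \<le> 2 * sqm b + 2 * sqm c"
proof -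
  obtain i where i: "Poly_Mapping.lookup b i \<noteq> Poly_Mapping.lookup c i" using assms by (metis poly_mapping_eqI)
  have id: "int (sqm (b + c)) + (\<Sum>j\<in>UNIV. (int (Poly_Mapping.lookup b j) - int (Poly_Mapping.lookup c j))^2) = 2 * int (sqm b) + 2 * int (sqm c)"
  proof -
    have t: "int ((Poly_Mapping.lookup (b+c) j)^2) + (int (Poly_Mapping.lookup b j) - int (Poly_Mapping.lookup c j))^2
       = 2 * int ((Poly_Mapping.lookup b j)^2) + 2 * int ((Poly_Mapping.lookup c j)^2)" for j
      by (simp add: lookup_add power2_eq_square of_nat_mult of_nat_add algebra_simps)
    have "int (sqm (b + c)) + (\<Sum>j\<in>UNIV. (int (Poly_Mapping.lookup b j) - int (Poly_Mapping.lookup c j))^2)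
      = (\<Sum>j\<in>UNIV. int ((Poly_Mapping.lookup (b+c) j)^2) + (int (Poly_Mapping.lookup b j) - int (Poly_Mapping.lookup c j))^2)"
      unfolding sqm_def of_nat_sum by (rule sum.distrib[symmetric])
    also have "\<dots> = (\<Sum>j\<in>UNIV. 2 * int ((Poly_Mapping.lookup b j)^2) + 2 * int ((Poly_Mapping.lookup c j)^2))"
      by (rule sum.cong[OF refl t])
    also have "\<dots> = 2 * int (sqm b) + 2 * int (sqm c)"
      unfolding sqm_def of_nat_sum by (simp only: sum.distrib sum_distrib_left)
    finally show ?thesis .
  qed
  have "1 \<le> (int (Poly_Mapping.lookup b i) - int (Poly_Mapping.lookup c i))^2"
  proof -
    have "0 < (int (Poly_Mapping.lookup b i) - int (Poly_Mapping.lookup c i))^2" using i by simp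
    then show ?thesis by linarith
  qed
  also have "\<dots> \<le> (\<Sum>j\<in>UNIV. (int (Poly_Mapping.lookup b j) - int (Poly_Mapping.lookup c j))^2)"
    by (rule member_le_sum) auto
  finally show ?thesis using id by linarith
qed

lemma Xsq: "(\<bar>x\<bar> * (s::real) ^ (2 * k))^2 = x^2 * s ^ (4 * k)"
proof -
  have "(s ^ (2 * k))^2 = s ^ (2 * (2 * k))" by (rule power_even_eq[symmetric])
  then show ?thesis by (simp add: power_mult_distrib)
qed

lemma sigma_block:
  fixes C :: "('v::finite \<Rightarrow>\<^sub>0 nat) set" and \<sigma> :: real
  assumes "finite C" "\<sigma> \<ge> 1" "\<sigma> \<ge> 2 * card C" "0 \<notin> C"
  shows "qf (\<lambda>b c. \<sigma> ^ sqm (b + c)) C u \<ge> (\<sigma> / 2) * nsq C u"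
proof -
  define X where "X b = \<bar>u b\<bar> * \<sigma> ^ (2 * sqm b)" for b
  define N where "N = real (card C)"
  have \<sigma>0: "\<sigma> > 0" using assms(2) by simp
  have tw: "u b * u c * \<sigma> ^ sqm (b + c) \<ge> (if b = c then (X b)^2 else 0) - ((X b)^2 + (X c)^2) / (2 * \<sigma>)"
    for b c
  proof (cases "b = c")
    case True
    have "u b * u b * \<sigma> ^ sqm (b + b) = (X b)^2" unfolding X_def sqm_double Xsq
      by (simp add: power2_eq_square)
    moreover have "0 \<le> ((X b)^2 + (X b)^2) / (2 * \<sigma>)" using \<sigma>0 by simp
    ultimately show ?thesis using True by simp
  next
    case False
    have "- (u b * u c * \<sigma> ^ sqm (b + c)) \<le> \<bar>u b\<bar> * \<bar>u c\<bar> * \<sigma> ^ sqm (b + c)"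
    proof -
      have "- (u b * u c) \<le> \<bar>u b\<bar> * \<bar>u c\<bar>" using abs_ge_minus_self[of "u b * u c"] by (simp add: abs_mult)
      from mult_right_mono[OF this less_imp_le[OF zero_less_power[OF \<sigma>0]]] show ?thesis by simp
    qed
    also have "\<dots> \<le> \<bar>u b\<bar> * \<bar>u c\<bar> * \<sigma> ^ (2 * sqm b + 2 * sqm c - 1)"
      using sqm_add_le[OF False] assms(2) by (intro mult_left_mono power_increasing) auto
    also have "\<sigma> ^ (2 * sqm b + 2 * sqm c - 1) = \<sigma> ^ (2 * sqm b) * \<sigma> ^ (2 * sqm c) / \<sigma>"
    proof -
      have "2 * sqm b + 2 * sqm c = Suc (2 * sqm b + 2 * sqm c - 1)" using sqm_add_le[OF False] by linarith
      then have "\<sigma> ^ (2 * sqm b) * \<sigma> ^ (2 * sqm c) = \<sigma> * \<sigma> ^ (2 * sqm b + 2 * sqm c - 1)"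
        by (metis power_add power_Suc)
      then show ?thesis using \<sigma>0 by simp
    qed
    also have "\<bar>u b\<bar> * \<bar>u c\<bar> * (\<sigma> ^ (2 * sqm b) * \<sigma> ^ (2 * sqm c) / \<sigma>) = X b * X c / \<sigma>"
      unfolding X_def by (simp add: mult_ac)
    also have "\<dots> \<le> ((X b)^2 + (X c)^2) / (2 * \<sigma>)"
    proof -
      have "2 * (X b * X c) \<le> (X b)^2 + (X c)^2" using zero_le_power2[of "X b - X c"]
        by (simp add: power2_eq_square algebra_simps)
      then show ?thesis using \<sigma>0 by (simp add: field_simps)
    qed
    finally show ?thesis using False by simp
  qed
  have "qf (\<lambda>b c. \<sigma> ^ sqm (b + c)) C u \<ge> (\<Sum>b\<in>C. \<Sum>c\<in>C. (if b = c then (X b)^2 else 0) - ((X b)^2 + (X c)^2) / (2 * \<sigma>))"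
    unfolding qf_def by (intro sum_mono tw)
  moreover have "(\<Sum>b\<in>C. \<Sum>c\<in>C. (if b = c then (X b)^2 else 0) - ((X b)^2 + (X c)^2) / (2 * \<sigma>))
     = (\<Sum>b\<in>C. (X b)^2) - N * (\<Sum>b\<in>C. (X b)^2) / \<sigma>"
  proof -
    have "(\<Sum>b\<in>C. \<Sum>c\<in>C. ((X b)^2 + (X c)^2) / (2 * \<sigma>)) = ((\<Sum>b\<in>C. \<Sum>c\<in>C. (X b)^2) + (\<Sum>b\<in>C. \<Sum>c\<in>C. (X c)^2)) / (2 * \<sigma>)"
      by (simp add: sum_divide_distrib[symmetric] sum.distrib)
    also have "(\<Sum>b\<in>C. \<Sum>c\<in>C. (X b)^2) = N * (\<Sum>b\<in>C. (X b)^2)" unfolding N_def by (simp add: sum_distrib_left)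
    also have "(\<Sum>b\<in>C. \<Sum>c\<in>C. (X c)^2) = N * (\<Sum>b\<in>C. (X b)^2)" unfolding N_def by (simp add: sum_distrib_left)
    finally have "(\<Sum>b\<in>C. \<Sum>c\<in>C. ((X b)^2 + (X c)^2) / (2 * \<sigma>)) = N * (\<Sum>b\<in>C. (X b)^2) / \<sigma>"
      using \<sigma>0 by simp
    moreover have "(\<Sum>b\<in>C. \<Sum>c\<in>C. (if b = c then (X b)^2 else 0)) = (\<Sum>b\<in>C. (X b)^2)"
      using assms(1) by (simp add: sum.delta)
    ultimately show ?thesis by (simp add: sum_subtractf)
  qed
  moreover have "(\<Sum>b\<in>C. (X b)^2) - N * (\<Sum>b\<in>C. (X b)^2) / \<sigma> \<ge> (\<Sum>b\<in>C. (X b)^2) / 2"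
  proof -
    have "N / \<sigma> \<le> 1 / 2" unfolding N_def using assms(3) \<sigma>0 by (simp add: field_simps)
    moreover have "(\<Sum>b\<in>C. (X b)^2) \<ge> 0" by (simp add: sum_nonneg)
    ultimately have "N / \<sigma> * (\<Sum>b\<in>C. (X b)^2) \<le> 1/2 * (\<Sum>b\<in>C. (X b)^2)" by (intro mult_right_mono)
    then show ?thesis by simp
  qed
  moreover have "(\<Sum>b\<in>C. (X b)^2) \<ge> \<sigma> * nsq C u"
    unfolding nsq_def sum_distrib_left
  proof (intro sum_mono)
    fix b assume "b \<in> C"
    then have "sqm b \<ge> 1" using assms(4) sqm_pos by metis
    have "\<sigma> \<le> \<sigma> ^ (4 * sqm b)" using assms(2) \<open>sqm b \<ge> 1\<close>
      using power_increasing[of 1 "4 * sqm b" \<sigma>] by simp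
    then have "\<sigma> * (u b)^2 \<le> \<sigma> ^ (4 * sqm b) * (u b)^2" by (intro mult_right_mono) auto
    also have "\<dots> = (X b)^2" unfolding X_def Xsq by simp
    finally show "\<sigma> * (u b)^2 \<le> (X b)^2" .
  qed
  moreover have "(\<sigma> / 2) * nsq C u = (\<sigma> * nsq C u) / 2" by simp
  ultimately show ?thesis by linarith
qed




lemma lookup_pscale: "Poly_Mapping.lookup (pscale c p) m = c * Poly_Mapping.lookup p m"
  unfolding pscale_def by (simp add: map.rep_eq when_def)

lemma keys_pscale: "Poly_Mapping.keys (pscale c p) \<subseteq> Poly_Mapping.keys p"
  by (auto simp: in_keys_iff lookup_pscale)

definition Lf :: "(('v::finite \<Rightarrow>\<^sub>0 nat) \<Rightarrow> real) \<Rightarrow> 'v rpoly \<Rightarrow> real" where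
  "Lf M q = (\<Sum>m\<in>Poly_Mapping.keys q. Poly_Mapping.lookup q m * M m)"

lemma Lf_superset:
  assumes "finite S" "Poly_Mapping.keys q \<subseteq> S"
  shows "Lf M q = (\<Sum>m\<in>S. Poly_Mapping.lookup q m * M m)"
  unfolding Lf_def by (rule sum.mono_neutral_left) (use assms in \<open>auto simp: in_keys_iff\<close>)

lemma Lf_add: "Lf M (p + q) = Lf M p + Lf M q"
proof -
  define S where "S = Poly_Mapping.keys p \<union> Poly_Mapping.keys q"
  have f: "finite S" unfolding S_def by simp
  have "Lf M (p + q) = (\<Sum>m\<in>S. Poly_Mapping.lookup (p + q) m * M m)"
    by (rule Lf_superset[OF f]) (unfold S_def, rule keys_add)
  also have "\<dots> = (\<Sum>m\<in>S. Poly_Mapping.lookup p m * M m) + (\<Sum>m\<in>S. Poly_Mapping.lookup q m * M m)"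
    by (simp add: lookup_add distrib_right sum.distrib)
  also have "\<dots> = Lf M p + Lf M q"
    using Lf_superset[OF f, of p M] Lf_superset[OF f, of q M] unfolding S_def by simp
  finally show ?thesis .
qed

lemma Lf_pscale: "Lf M (pscale c p) = c * Lf M p"
proof -
  have "Lf M (pscale c p) = (\<Sum>m\<in>Poly_Mapping.keys p. Poly_Mapping.lookup (pscale c p) m * M m)"
    by (rule Lf_superset) (auto simp: keys_pscale)
  also have "\<dots> = c * Lf M p" unfolding Lf_def lookup_pscale sum_distrib_left by (simp only: mult.assoc)
  finally show ?thesis .
qed

lemma lookup_mult_fin:
  assumes "finite S" "finite T" "Poly_Mapping.keys p \<subseteq> S" "Poly_Mapping.keys q \<subseteq> T"
  shows "Poly_Mapping.lookup (p * q) k =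
    (\<Sum>a\<in>S. \<Sum>b\<in>T. if k = a + b then Poly_Mapping.lookup p a * Poly_Mapping.lookup q b else 0)"
proof -
  have inner: "(\<Sum>b. Poly_Mapping.lookup q b when k = a + b) = (\<Sum>b\<in>T. if k = a + b then Poly_Mapping.lookup q b else 0)" for a
    by (subst Sum_any.expand_superset[OF assms(2)]) (use assms(4) in \<open>auto simp: in_keys_iff when_def\<close>)
  have "Poly_Mapping.lookup (p * q) k = (\<Sum>a. Poly_Mapping.lookup p a * (\<Sum>b. Poly_Mapping.lookup q b when k = a + b))"
    by (rule lookup_mult)
  also have "\<dots> = (\<Sum>a\<in>S. Poly_Mapping.lookup p a * (\<Sum>b. Poly_Mapping.lookup q b when k = a + b))"
    apply (rule Sum_any.expand_superset[OF assms(1)])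
    using assms(3) by (auto simp: in_keys_iff subset_iff) (metis mult_zero_left)
  also have "\<dots> = (\<Sum>a\<in>S. \<Sum>b\<in>T. if k = a + b then Poly_Mapping.lookup p a * Poly_Mapping.lookup q b else 0)"
    unfolding inner sum_distrib_left by (intro sum.cong refl) simp
  finally show ?thesis .
qed

lemma Lf_mult:
  assumes "finite S" "finite T" "Poly_Mapping.keys p \<subseteq> S" "Poly_Mapping.keys q \<subseteq> T"
  shows "Lf M (p * q) = (\<Sum>a\<in>S. \<Sum>b\<in>T. Poly_Mapping.lookup p a * Poly_Mapping.lookup q b * M (a + b))"
proof -
  define U where "U = (\<lambda>(a, b). a + b) ` (S \<times> T)"
  have fU: "finite U" unfolding U_def using assms by simp
  have kU: "Poly_Mapping.keys (p * q) \<subseteq> U"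
    using keys_mult[of p q] assms(3,4) unfolding U_def by force
  have "Lf M (p * q) = (\<Sum>k\<in>U. Poly_Mapping.lookup (p * q) k * M k)"
    by (rule Lf_superset[OF fU kU])
  also have "\<dots> = (\<Sum>k\<in>U. \<Sum>a\<in>S. \<Sum>b\<in>T. if k = a + b then Poly_Mapping.lookup p a * Poly_Mapping.lookup q b * M k else 0)"
    unfolding lookup_mult_fin[OF assms] sum_distrib_right by (intro sum.cong refl) simp
  also have "\<dots> = (\<Sum>a\<in>S. \<Sum>k\<in>U. \<Sum>b\<in>T. if k = a + b then Poly_Mapping.lookup p a * Poly_Mapping.lookup q b * M k else 0)"
    by (rule sum.swap)
  also have "\<dots> = (\<Sum>a\<in>S. \<Sum>b\<in>T. \<Sum>k\<in>U. if k = a + b then Poly_Mapping.lookup p a * Poly_Mapping.lookup q b * M k else 0)"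
    by (rule sum.cong[OF refl], rule sum.swap)
  also have "\<dots> = (\<Sum>a\<in>S. \<Sum>b\<in>T. Poly_Mapping.lookup p a * Poly_Mapping.lookup q b * M (a + b))"
  proof (intro sum.cong refl)
    fix a b assume "a \<in> S" "b \<in> T"
    then have "a + b \<in> U" unfolding U_def by force
    then show "(\<Sum>k\<in>U. if k = a + b then Poly_Mapping.lookup p a * Poly_Mapping.lookup q b * M k else 0)
      = Poly_Mapping.lookup p a * Poly_Mapping.lookup q b * M (a + b)"
      using fU by (simp add: sum.delta')
  qed
  finally show ?thesis .
qed




lemma mon_deg_UNIV: "mon_deg (m::'v::finite \<Rightarrow>\<^sub>0 nat) = (\<Sum>i\<in>UNIV. Poly_Mapping.lookup m i)"
  unfolding mon_deg_def by (rule sum.mono_neutral_left) (auto simp: in_keys_iff)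

lemma mon_deg_add: "mon_deg (a + b :: 'v::finite \<Rightarrow>\<^sub>0 nat) = mon_deg a + mon_deg b"
  unfolding mon_deg_UNIV by (simp add: lookup_add sum.distrib)

lemma mon_deg_zero: "mon_deg (0 :: 'v::finite \<Rightarrow>\<^sub>0 nat) = 0"
  unfolding mon_deg_def by simp

lemma lookup_le_mon_deg: "Poly_Mapping.lookup (m::'v::finite \<Rightarrow>\<^sub>0 nat) i \<le> mon_deg m"
  unfolding mon_deg_UNIV by (rule member_le_sum) auto

definition Smon :: "nat \<Rightarrow> ('v::finite \<Rightarrow>\<^sub>0 nat) set" where
  "Smon K = {m. mon_deg m \<le> K}"

lemma finite_Smon: "finite (Smon K :: ('v::finite \<Rightarrow>\<^sub>0 nat) set)"
proof -
  have sub: "Poly_Mapping.lookup ` Smon K \<subseteq> (\<Pi>\<^sub>E i\<in>UNIV. {..K})"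
    unfolding Smon_def using lookup_le_mon_deg order_trans by fastforce
  have "finite (Poly_Mapping.lookup ` Smon K)" by (rule finite_subset[OF sub]) (rule finite_PiE, auto)
  moreover have "inj_on Poly_Mapping.lookup (Smon K)"
    by (rule inj_onI) (metis poly_mapping_eqI)
  ultimately show ?thesis by (rule finite_imageD)
qed

lemma deg_le_keys: "deg_le k p \<longleftrightarrow> Poly_Mapping.keys p \<subseteq> Smon k"
  unfolding deg_le_def Smon_def by auto

lemma deg_le_mult:
  fixes p q :: "'v::finite rpoly"
  assumes "deg_le j p" "deg_le k q" shows "deg_le (j + k) (p * q)"
  unfolding deg_le_def
proof
  fix m assume "m \<in> Poly_Mapping.keys (p * q)"
  then obtain a b where "m = a + b" "a \<in> Poly_Mapping.keys p" "b \<in> Poly_Mapping.keys q"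
    using keys_mult[of p q] by blast
  then show "mon_deg m \<le> j + k" using assms unfolding deg_le_def by (simp add: mon_deg_add add_mono)
qed

lemma deg_le_mono: "deg_le j p \<Longrightarrow> j \<le> k \<Longrightarrow> deg_le k p"
  unfolding deg_le_def by force

lemma L_repr:
  fixes L :: "'v::finite rpoly \<Rightarrow> real"
  assumes lin: "linear_on_deg k L" and q: "deg_le k q"
  shows "L q = (\<Sum>m\<in>Poly_Mapping.keys q. Poly_Mapping.lookup q m * L (Poly_Mapping.single m 1))"
proof -
  have add: "\<And>p q. deg_le k p \<Longrightarrow> deg_le k q \<Longrightarrow> L (p + q) = L p + L q"
    and sc: "\<And>c p. deg_le k p \<Longrightarrow> L (pscale c p) = c * L p"
    using lin unfolding linear_on_deg_def by auto
  have single: "pscale c (Poly_Mapping.single m 1) = Poly_Mapping.single m c" for c and m :: "'v \<Rightarrow>\<^sub>0 nat"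
    by (rule poly_mapping_eqI) (simp add: lookup_pscale lookup_single when_def)
  have dsingle: "deg_le k (Poly_Mapping.single m c)" if "m \<in> Poly_Mapping.keys q" for m c
    using q that unfolding deg_le_def by (cases "c = 0") auto
  have L0: "L 0 = 0"
  proof -
    have "pscale 0 (0::'v rpoly) = 0" by (rule poly_mapping_eqI) (simp add: lookup_pscale)
    then show ?thesis using sc[of 0 0] by (simp add: deg_le_def)
  qed
  have main: "F \<subseteq> Poly_Mapping.keys q \<Longrightarrow>
      L (\<Sum>m\<in>F. Poly_Mapping.single m (Poly_Mapping.lookup q m)) = (\<Sum>m\<in>F. Poly_Mapping.lookup q m * L (Poly_Mapping.single m 1))
      \<and> deg_le k (\<Sum>m\<in>F. Poly_Mapping.single m (Poly_Mapping.lookup q m))" for F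
  proof (induction F rule: infinite_finite_induct)
    case (infinite F)
    then show ?case using L0 by (simp add: deg_le_def)
  next
    case empty
    then show ?case using L0 by (simp add: deg_le_def)
  next
    case (insert x F)
    then have x: "x \<in> Poly_Mapping.keys q" and IH: "L (\<Sum>m\<in>F. Poly_Mapping.single m (Poly_Mapping.lookup q m)) = (\<Sum>m\<in>F. Poly_Mapping.lookup q m * L (Poly_Mapping.single m 1))"
      "deg_le k (\<Sum>m\<in>F. Poly_Mapping.single m (Poly_Mapping.lookup q m))" by auto
    have dx: "deg_le k (Poly_Mapping.single x (Poly_Mapping.lookup q x))" by (rule dsingle[OF x])
    have "L (Poly_Mapping.single x (Poly_Mapping.lookup q x)) = Poly_Mapping.lookup q x * L (Poly_Mapping.single x 1)"
      using sc[OF dsingle[OF x, of 1], of "Poly_Mapping.lookup q x"] single by simp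
    moreover have "deg_le k (Poly_Mapping.single x (Poly_Mapping.lookup q x) + (\<Sum>m\<in>F. Poly_Mapping.single m (Poly_Mapping.lookup q m)))"
      using dx IH(2) keys_add unfolding deg_le_keys by (metis Un_least order_trans)
    moreover have "(\<Sum>m\<in>insert x F. Poly_Mapping.single m (Poly_Mapping.lookup q m)) = Poly_Mapping.single x (Poly_Mapping.lookup q x) + (\<Sum>m\<in>F. Poly_Mapping.single m (Poly_Mapping.lookup q m))"
      by (rule sum.insert) (use insert.hyps in auto)
    moreover have "(\<Sum>m\<in>insert x F. Poly_Mapping.lookup q m * L (Poly_Mapping.single m 1)) = Poly_Mapping.lookup q x * L (Poly_Mapping.single x 1) + (\<Sum>m\<in>F. Poly_Mapping.lookup q m * L (Poly_Mapping.single m 1))"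
      by (rule sum.insert) (use insert.hyps in auto)
    ultimately show ?case using add[OF dx IH(2)] IH(1) by simp
  qed
  have qeq: "q = (\<Sum>m\<in>Poly_Mapping.keys q. Poly_Mapping.single m (Poly_Mapping.lookup q m))"
  proof (rule poly_mapping_eqI)
    fix k
    have "Poly_Mapping.lookup (\<Sum>m\<in>Poly_Mapping.keys q. Poly_Mapping.single m (Poly_Mapping.lookup q m)) k
       = (\<Sum>m\<in>Poly_Mapping.keys q. if m = k then Poly_Mapping.lookup q m else 0)"
      unfolding lookup_sum by (intro sum.cong refl) (simp add: lookup_single when_def)
    also have "\<dots> = Poly_Mapping.lookup q k" by (simp add: sum.delta' in_keys_iff)
    finally show "Poly_Mapping.lookup q k = Poly_Mapping.lookup (\<Sum>m\<in>Poly_Mapping.keys q. Poly_Mapping.single m (Poly_Mapping.lookup q m)) k" by simp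
  qed
  have "L q = L (\<Sum>m\<in>Poly_Mapping.keys q. Poly_Mapping.single m (Poly_Mapping.lookup q m))"
    using qeq by (rule arg_cong)
  also have "\<dots> = (\<Sum>m\<in>Poly_Mapping.keys q. Poly_Mapping.lookup q m * L (Poly_Mapping.single m 1))"
    using main[of "Poly_Mapping.keys q"] by simp
  finally show ?thesis .
qed




definition goodM :: "nat \<Rightarrow> (('v::finite \<Rightarrow>\<^sub>0 nat) \<Rightarrow> real) \<Rightarrow> bool" where
  "goodM K M \<longleftrightarrow> (\<exists>\<alpha>>0. \<forall>u. qf (\<lambda>a b. M (a + b)) (Smon K) u \<ge> \<alpha> * nsq (Smon K) u)"

lemma qf_cong2: "(\<And>a b. a \<in> S \<Longrightarrow> b \<in> S \<Longrightarrow> G a b = H a b) \<Longrightarrow> qf G S u = qf H S u"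
  unfolding qf_def by (auto intro!: sum.cong)

lemma step:
  fixes M :: "('v::finite \<Rightarrow>\<^sub>0 nat) \<Rightarrow> real"
  assumes "goodM K M"
  shows "\<exists>M'. (\<forall>m. mon_deg m \<le> 2 * K \<longrightarrow> M' m = M m) \<and> goodM (Suc K) M'"
proof -
  obtain \<alpha> where \<alpha>: "\<alpha> > 0" "\<And>u. qf (\<lambda>a b. M (a + b)) (Smon K) u \<ge> \<alpha> * nsq (Smon K) u"
    using assms unfolding goodM_def by blast
  define A where "A = (Smon K :: ('v \<Rightarrow>\<^sub>0 nat) set)"
  define C where "C = {m :: 'v \<Rightarrow>\<^sub>0 nat. mon_deg m = Suc K}"
  have fA: "finite A" unfolding A_def by (rule finite_Smon)
  have fC: "finite C" by (rule finite_subset[OF _ finite_Smon[of "Suc K"]]) (auto simp: C_def Smon_def)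
  have AC: "A \<inter> C = {}" unfolding A_def C_def Smon_def by auto
  have SU: "Smon (Suc K) = A \<union> C" unfolding A_def C_def Smon_def by auto
  define P0 where "P0 a b = (if mon_deg (a + b) \<le> 2 * K then M (a + b) else 0)" for a b
  define G where "G = (\<Sum>a\<in>A. \<Sum>c\<in>C. \<bar>P0 a c\<bar>)"
  have "G \<ge> 0" unfolding G_def by (simp add: sum_nonneg)
  define \<tau> where "\<tau> = 2 * (G + 1) * G / \<alpha> + \<alpha> / 2"
  have "\<tau> > 0" unfolding \<tau>_def using \<open>G \<ge> 0\<close> \<alpha>(1) by (simp add: add_nonneg_pos)
  define \<sigma> :: real where "\<sigma> = 2 * real (card C) + 2 * \<tau> + 1"
  have \<sigma>1: "\<sigma> \<ge> 1" "\<sigma> \<ge> 2 * card C" "\<sigma> / 2 \<ge> \<tau>" unfolding \<sigma>_def using \<open>\<tau> > 0\<close> by auto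
  define M' where "M' m = (if mon_deg m \<le> 2 * K then M m else if mon_deg m \<le> 2 * K + 1 then 0 else \<sigma> ^ sqm m)" for m
  have agree: "\<forall>m. mon_deg m \<le> 2 * K \<longrightarrow> M' m = M m" unfolding M'_def by simp
  have QA: "qf (\<lambda>a b. M' (a + b)) A u \<ge> \<alpha> * nsq A u" for u
  proof -
    have "qf (\<lambda>a b. M' (a + b)) A u = qf (\<lambda>a b. M (a + b)) A u"
      by (rule qf_cong2) (auto simp: A_def Smon_def M'_def mon_deg_add)
    then show ?thesis using \<alpha>(2)[of u] unfolding A_def by simp
  qed
  have QC: "qf (\<lambda>a b. M' (a + b)) C u \<ge> \<tau> * nsq C u" for u
  proof -
    have "qf (\<lambda>a b. M' (a + b)) C u = qf (\<lambda>b c. \<sigma> ^ sqm (b + c)) C u"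
      by (rule qf_cong2) (auto simp: C_def M'_def mon_deg_add)
    also have "\<dots> \<ge> (\<sigma> / 2) * nsq C u"
      by (rule sigma_block[OF fC \<sigma>1(1,2)]) (auto simp: C_def mon_deg_zero)
    moreover have "(\<sigma> / 2) * nsq C u \<ge> \<tau> * nsq C u"
      using \<sigma>1(3) nsq_nonneg by (intro mult_right_mono)
    ultimately show ?thesis by linarith
  qed
  have G': "G = (\<Sum>a\<in>A. \<Sum>c\<in>C. \<bar>M' (a + c)\<bar>)"
    unfolding G_def by (intro sum.cong refl) (auto simp: A_def C_def Smon_def M'_def P0_def mon_deg_add)
  have "\<forall>u. qf (\<lambda>a b. M' (a + b)) (A \<union> C) u \<ge> (\<alpha> / 2) * nsq (A \<union> C) u"
  proof
    fix u show "qf (\<lambda>a b. M' (a + b)) (A \<union> C) u \<ge> (\<alpha> / 2) * nsq (A \<union> C) u"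
      by (rule block_step[OF fA fC AC \<alpha>(1) QA QC _ G']) (auto simp: \<tau>_def add.commute)
  qed
  then have "goodM (Suc K) M'" unfolding goodM_def SU using \<alpha>(1) by (intro exI[of _ "\<alpha> / 2"]) auto
  with agree show ?thesis by blast
qed




definition nextM :: "nat \<Rightarrow> (('v::finite \<Rightarrow>\<^sub>0 nat) \<Rightarrow> real) \<Rightarrow> (('v \<Rightarrow>\<^sub>0 nat) \<Rightarrow> real)" where
  "nextM K M = (SOME M'. (\<forall>m. mon_deg m \<le> 2 * K \<longrightarrow> M' m = M m) \<and> goodM (Suc K) M')"

primrec extM :: "nat \<Rightarrow> (('v::finite \<Rightarrow>\<^sub>0 nat) \<Rightarrow> real) \<Rightarrow> nat \<Rightarrow> (('v \<Rightarrow>\<^sub>0 nat) \<Rightarrow> real)" where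
  "extM d M0 0 = M0"
| "extM d M0 (Suc k) = nextM (d + k) (extM d M0 k)"

lemma extM_good:
  assumes "goodM d M0"
  shows "goodM (d + k) (extM d M0 k) \<and> (\<forall>m. mon_deg m \<le> 2 * (d + k) \<longrightarrow> extM d M0 (Suc k) m = extM d M0 k m)"
proof (induction k)
  case 0
  have "\<exists>M'. (\<forall>m. mon_deg m \<le> 2 * d \<longrightarrow> M' m = M0 m) \<and> goodM (Suc d) M'" by (rule step) (use assms in simp)
  then have "(\<forall>m. mon_deg m \<le> 2 * d \<longrightarrow> nextM d M0 m = M0 m) \<and> goodM (Suc d) (nextM d M0)"
    unfolding nextM_def by (rule someI_ex)
  then show ?case using assms by simp
next
  case (Suc k)
  have g: "goodM (d + Suc k) (extM d M0 (Suc k))"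
  proof -
    have "\<exists>M'. (\<forall>m. mon_deg m \<le> 2 * (d + k) \<longrightarrow> M' m = extM d M0 k m) \<and> goodM (Suc (d + k)) M'"
      by (rule step) (use Suc in simp)
    then have "goodM (Suc (d + k)) (nextM (d + k) (extM d M0 k))"
      unfolding nextM_def by (rule someI2_ex) auto
    then show ?thesis by simp
  qed
  have "\<exists>M'. (\<forall>m. mon_deg m \<le> 2 * (d + Suc k) \<longrightarrow> M' m = extM d M0 (Suc k) m) \<and> goodM (Suc (d + Suc k)) M'"
    by (rule step[OF g])
  then have "(\<forall>m. mon_deg m \<le> 2 * (d + Suc k) \<longrightarrow> nextM (d + Suc k) (extM d M0 (Suc k)) m = extM d M0 (Suc k) m)"
    unfolding nextM_def by (rule someI2_ex) auto
  then show ?case using g by simp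
qed

lemma extM_stable:
  assumes "goodM d M0" "mon_deg m \<le> 2 * (d + k)" "k \<le> j"
  shows "extM d M0 j m = extM d M0 k m"
  using assms(3)
proof (induction j rule: dec_induct)
  case base then show ?case by simp
next
  case (step j)
  have "2 * (d + k) \<le> 2 * (d + j)" using step.hyps(1) by simp
  then have "mon_deg m \<le> 2 * (d + j)" using assms(2) by (rule le_trans[rotated])
  then have "extM d M0 (Suc j) m = extM d M0 j m" using extM_good[OF assms(1), of j] by blast
  then show ?case using step.IH by simp
qed

definition Mfin :: "nat \<Rightarrow> (('v::finite \<Rightarrow>\<^sub>0 nat) \<Rightarrow> real) \<Rightarrow> ('v \<Rightarrow>\<^sub>0 nat) \<Rightarrow> real" where
  "Mfin d M0 m = extM d M0 (mon_deg m) m"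

lemma Mfin_eq:
  assumes "goodM d M0" "mon_deg m \<le> 2 * (d + k)"
  shows "Mfin d M0 m = extM d M0 k m"
proof (cases "mon_deg m \<le> k")
  case True
  have "extM d M0 k m = extM d M0 (mon_deg m) m"
    by (rule extM_stable[OF assms(1) _ True]) simp
  then show ?thesis unfolding Mfin_def by simp
next
  case False
  then show ?thesis unfolding Mfin_def by (intro extM_stable[OF assms]) simp
qed




lemma nsq_pos: "finite S \<Longrightarrow> a \<in> S \<Longrightarrow> u a \<noteq> 0 \<Longrightarrow> nsq S u > 0"
  unfolding nsq_def by (rule sum_pos2[of S a]) auto

theorem lemma3p4:
  fixes d :: nat and L :: "('v::finite) rpoly \<Rightarrow> real"
  assumes "linear_on_deg (2 * d) L"
    and "\<And>p. deg_le d p \<Longrightarrow> p \<noteq> 0 \<Longrightarrow> L (p * p) > 0"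
  shows "\<exists>L'. linear_poly_fun L' \<and> (\<forall>p. deg_le (2 * d) p \<longrightarrow> L' p = L p) \<and>
              (\<forall>p. p \<noteq> 0 \<longrightarrow> L' (p * p) > 0)"
proof -
  define M0 where "M0 m = L (Poly_Mapping.single m 1)" for m
  have LM0: "L q = Lf M0 q" if "deg_le (2 * d) q" for q
    unfolding Lf_def M0_def by (rule L_repr[OF assms(1) that])
  have base: "goodM d M0"
  proof -
    have "\<exists>\<alpha>>0. \<forall>u. qf (\<lambda>a b. M0 (a + b)) (Smon d) u \<ge> \<alpha> * nsq (Smon d) u"
    proof (rule coercive[OF finite_Smon])
      show "M0 (a + b) = M0 (b + a)" for a b by (simp add: add.commute)
    next
      fix u :: "('v \<Rightarrow>\<^sub>0 nat) \<Rightarrow> real" assume u: "\<exists>a\<in>Smon d. u a \<noteq> 0"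
      define f where "f m = (if m \<in> Smon d then u m else 0)" for m
      have ff: "finite {m. f m \<noteq> 0}" by (rule finite_subset[OF _ finite_Smon[of d]]) (auto simp: f_def)
      define p :: "'v rpoly" where "p = Abs_poly_mapping f"
      have lp: "Poly_Mapping.lookup p = f" unfolding p_def using ff by simp
      have kp: "Poly_Mapping.keys p \<subseteq> Smon d" by (auto simp: in_keys_iff lp f_def split: if_splits)
      then have dp: "deg_le d p" by (simp add: deg_le_keys)
      have "p \<noteq> 0" using u lp by (metis f_def lookup_zero)
      then have "L (p * p) > 0" using assms(2) dp by blast
      moreover have "deg_le (2 * d) (p * p)" using deg_le_mult[OF dp dp] by (simp add: mult_2)
      then have "L (p * p) = Lf M0 (p * p)" by (rule LM0)
      also have "\<dots> = (\<Sum>a\<in>Smon d. \<Sum>b\<in>Smon d. Poly_Mapping.lookup p a * Poly_Mapping.lookup p b * M0 (a + b))"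
        by (rule Lf_mult[OF finite_Smon finite_Smon kp kp])
      also have "\<dots> = qf (\<lambda>a b. M0 (a + b)) (Smon d) u"
        unfolding qf_def by (intro sum.cong refl) (simp add: lp f_def)
      finally show "qf (\<lambda>a b. M0 (a + b)) (Smon d) u > 0" by simp
    qed
    then show ?thesis unfolding goodM_def .
  qed
  define L' where "L' = Lf (Mfin d M0)"
  have "linear_poly_fun L'" unfolding linear_poly_fun_def L'_def by (simp add: Lf_add Lf_pscale)
  moreover have "\<forall>p. deg_le (2 * d) p \<longrightarrow> L' p = L p"
  proof (intro allI impI)
    fix p :: "'v rpoly" assume dp: "deg_le (2 * d) p"
    have "L' p = Lf M0 p" unfolding L'_def Lf_def
    proof (intro sum.cong refl)
      fix m assume "m \<in> Poly_Mapping.keys p"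
      then have "mon_deg m \<le> 2 * (d + 0)" using dp unfolding deg_le_def by simp
      then show "Poly_Mapping.lookup p m * Mfin d M0 m = Poly_Mapping.lookup p m * M0 m"
        using Mfin_eq[OF base, of m 0] by simp
    qed
    then show "L' p = L p" using LM0[OF dp] by simp
  qed
  moreover have "\<forall>p. p \<noteq> 0 \<longrightarrow> L' (p * p) > 0"
  proof (intro allI impI)
    fix p :: "'v rpoly" assume "p \<noteq> 0"
    define k where "k = (\<Sum>m\<in>Poly_Mapping.keys p. mon_deg m)"
    define S where "S = (Smon (d + k) :: ('v \<Rightarrow>\<^sub>0 nat) set)"
    have kp: "Poly_Mapping.keys p \<subseteq> S"
    proof
      fix m assume "m \<in> Poly_Mapping.keys p"
      then have "mon_deg m \<le> k" unfolding k_def by (intro member_le_sum) auto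
      then show "m \<in> S" unfolding S_def Smon_def by simp
    qed
    obtain \<alpha> where \<alpha>: "\<alpha> > 0" "\<And>u. qf (\<lambda>a b. extM d M0 k (a + b)) S u \<ge> \<alpha> * nsq S u"
      using extM_good[OF base, of k] unfolding goodM_def S_def by blast
    have "L' (p * p) = (\<Sum>a\<in>S. \<Sum>b\<in>S. Poly_Mapping.lookup p a * Poly_Mapping.lookup p b * Mfin d M0 (a + b))"
      unfolding L'_def S_def by (rule Lf_mult[OF finite_Smon finite_Smon]) (use kp S_def in auto)
    also have "\<dots> = qf (\<lambda>a b. extM d M0 k (a + b)) S (Poly_Mapping.lookup p)"
      unfolding qf_def
    proof (intro sum.cong refl)
      fix a b assume "a \<in> S" "b \<in> S"
      then have "mon_deg (a + b) \<le> 2 * (d + k)" unfolding S_def Smon_def by (simp add: mon_deg_add)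
      then show "Poly_Mapping.lookup p a * Poly_Mapping.lookup p b * Mfin d M0 (a + b) =
        Poly_Mapping.lookup p a * Poly_Mapping.lookup p b * extM d M0 k (a + b)"
        using Mfin_eq[OF base] by simp
    qed
    also have "\<dots> \<ge> \<alpha> * nsq S (Poly_Mapping.lookup p)" by (rule \<alpha>(2))
    moreover have "nsq S (Poly_Mapping.lookup p) > 0"
    proof -
      obtain m where "Poly_Mapping.lookup p m \<noteq> 0" using \<open>p \<noteq> 0\<close> by (metis lookup_zero poly_mapping_eqI)
      moreover then have "m \<in> S" using kp by (auto simp: in_keys_iff)
      ultimately show ?thesis by (intro nsq_pos) (auto simp: S_def finite_Smon)
    qed
    ultimately show "L' (p * p) > 0" using \<alpha>(1) by (smt (verit) mult_pos_pos)
  qed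
  ultimately show ?thesis by blast
qed



end
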